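(* Let $k,\ell\ge 1$ and let $G$ and $H$ be graphs with $\delta(G)\ge k$ and $\delta(H)\ge \ell$. Then \[ \Gamma_{\times k\ell,t}(G\times H)\ge\Gamma_{\times k,t}(G)\cdot\Gamma_{\times \ell,t}(H). \]
   Context: For an integer $k\ge1$ and a graph $G$ with $\delta(G)\ge k$, a set $S\subseteq V(G)$ is a $k$-tuple total dominating set ($k$TDS) if $|N_G(x)\cap S|\ge k$ for every $x\in V(G)$, and $\Gamma_{\times k,t}(G)$ is the maximum cardinality of a minimal (with respect to inclusion) $k$TDS of $G$. The cross (direct) product $G\times H$ has vertex set $V(G)\times V(H)$, with $(g_1,h_1)\sim(g_2,h_2)$ iff $g_1g_2\in E(G)$ and $h_1h_2\in E(H)$. *)

theory Defs
  imports Main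
begin

definition graph :: "'a set \<Rightarrow> ('a \<Rightarrow> 'a \<Rightarrow> bool) \<Rightarrow> bool" where
  "graph V E \<longleftrightarrow> finite V \<and> V \<noteq> {} \<and>
     (\<forall>x y. E x y \<longrightarrow> x \<in> V \<and> y \<in> V) \<and>
     (\<forall>x y. E x y \<longrightarrow> E y x) \<and> (\<forall>x. \<not> E x x)"

definition nbhd :: "'a set \<Rightarrow> ('a \<Rightarrow> 'a \<Rightarrow> bool) \<Rightarrow> 'a \<Rightarrow> 'a set" where
  "nbhd V E x = {y \<in> V. E x y}"

definition min_degree :: "'a set \<Rightarrow> ('a \<Rightarrow> 'a \<Rightarrow> bool) \<Rightarrow> nat" where
  "min_degree V E = Min ((\<lambda>x. card (nbhd V E x)) ` V)"

definition is_kTDS :: "nat \<Rightarrow> 'a set \<Rightarrow> ('a \<Rightarrow> 'a \<Rightarrow> bool) \<Rightarrow> 'a set \<Rightarrow> bool" where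
  "is_kTDS k V E S \<longleftrightarrow> S \<subseteq> V \<and> (\<forall>x\<in>V. card (nbhd V E x \<inter> S) \<ge> k)"

definition is_minimal_kTDS :: "nat \<Rightarrow> 'a set \<Rightarrow> ('a \<Rightarrow> 'a \<Rightarrow> bool) \<Rightarrow> 'a set \<Rightarrow> bool" where
  "is_minimal_kTDS k V E S \<longleftrightarrow> is_kTDS k V E S \<and> (\<forall>T. T \<subset> S \<longrightarrow> \<not> is_kTDS k V E T)"

definition upper_ktuple_tdom :: "nat \<Rightarrow> 'a set \<Rightarrow> ('a \<Rightarrow> 'a \<Rightarrow> bool) \<Rightarrow> nat" where
  "upper_ktuple_tdom k V E = Max {card S | S. is_minimal_kTDS k V E S}"

text \<open>Cross (direct) product of graphs: vertex set V1 \<times> V2.\<close>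
definition cross_edges :: "('a \<Rightarrow> 'a \<Rightarrow> bool) \<Rightarrow> ('b \<Rightarrow> 'b \<Rightarrow> bool) \<Rightarrow> ('a \<times> 'b) \<Rightarrow> ('a \<times> 'b) \<Rightarrow> bool" where
  "cross_edges E1 E2 p q \<longleftrightarrow> E1 (fst p) (fst q) \<and> E2 (snd p) (snd q)"

end

theory Submission
  imports Defs
begin

lemma nbhd_fin: "finite V \<Longrightarrow> finite (nbhd V E x)"
  unfolding nbhd_def by simp

lemma min_witness:
  assumes m: "is_minimal_kTDS k V E S" and a: "a \<in> S" and f: "finite V"
  shows "\<exists>x\<in>V. card (nbhd V E x \<inter> S) = k \<and> a \<in> nbhd V E x"
proof -
  have kt: "is_kTDS k V E S" and mm: "\<forall>T. T \<subset> S \<longrightarrow> \<not> is_kTDS k V E T"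
    using m unfolding is_minimal_kTDS_def by auto
  have "S - {a} \<subset> S" using a by auto
  hence "\<not> is_kTDS k V E (S - {a})" using mm by blast
  moreover have "S - {a} \<subseteq> V" using kt unfolding is_kTDS_def by auto
  ultimately obtain x where x: "x \<in> V" "card (nbhd V E x \<inter> (S - {a})) < k"
    unfolding is_kTDS_def by auto
  have ge: "card (nbhd V E x \<inter> S) \<ge> k" using kt x(1) unfolding is_kTDS_def by auto
  have eq: "nbhd V E x \<inter> (S - {a}) = (nbhd V E x \<inter> S) - {a}" by auto
  have fin: "finite (nbhd V E x \<inter> S)" using nbhd_fin[OF f] by auto
  show ?thesis
  proof (cases "a \<in> nbhd V E x")
    case True
    hence "card (nbhd V E x \<inter> (S - {a})) = card (nbhd V E x \<inter> S) - 1"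
      using eq fin a by (simp add: card_Diff_singleton)
    hence "card (nbhd V E x \<inter> S) = k" using x ge by linarith
    thus ?thesis using x True by blast
  next
    case False
    hence "nbhd V E x \<inter> (S - {a}) = nbhd V E x \<inter> S" by auto
    thus ?thesis using x ge by auto
  qed
qed

lemma exists_min:
  assumes g: "graph V E" and d: "min_degree V E \<ge> k"
  shows "\<exists>S. is_minimal_kTDS k V E S"
proof -
  have f: "finite V" and ne: "V \<noteq> {}" using g unfolding graph_def by auto
  have "is_kTDS k V E V"
    unfolding is_kTDS_def
  proof (intro conjI ballI)
    fix x assume x: "x \<in> V"
    have "min_degree V E \<le> card (nbhd V E x)"
      unfolding min_degree_def using f x by (intro Min_le) auto
    moreover have "nbhd V E x \<inter> V = nbhd V E x" unfolding nbhd_def by auto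
    ultimately show "k \<le> card (nbhd V E x \<inter> V)" using d by simp
  qed simp
  hence ex: "\<exists>n S. is_kTDS k V E S \<and> card S = n" by blast
  define n where "n = (LEAST n. \<exists>S. is_kTDS k V E S \<and> card S = n)"
  obtain S where S: "is_kTDS k V E S" "card S = n"
    using LeastI_ex[OF ex] unfolding n_def by blast
  have fS: "finite S" using S f unfolding is_kTDS_def by (auto intro: finite_subset)
  have "is_minimal_kTDS k V E S"
    unfolding is_minimal_kTDS_def
  proof (intro conjI allI impI S(1))
    fix T assume T: "T \<subset> S"
    hence "card T < n" using S fS psubset_card_mono by metis
    thus "\<not> is_kTDS k V E T" using not_less_Least[of "card T" "\<lambda>n. \<exists>S. is_kTDS k V E S \<and> card S = n"]
      unfolding n_def by blast
  qed
  thus ?thesis by blast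
qed

lemma upper_attained:
  assumes g: "graph V E" and d: "min_degree V E \<ge> k"
  shows "\<exists>S. is_minimal_kTDS k V E S \<and> upper_ktuple_tdom k V E = card S"
proof -
  have f: "finite V" using g unfolding graph_def by auto
  have fin: "finite {card S | S. is_minimal_kTDS k V E S}"
  proof (rule finite_subset)
    show "{card S | S. is_minimal_kTDS k V E S} \<subseteq> card ` Pow V"
      unfolding is_minimal_kTDS_def is_kTDS_def by auto
  qed (use f in auto)
  have "{card S | S. is_minimal_kTDS k V E S} \<noteq> {}" using exists_min[OF g d] by auto
  from Max_in[OF fin this] show ?thesis unfolding upper_ktuple_tdom_def by auto
qed

lemma nbhd_prod: "nbhd (V1 \<times> V2) (cross_edges E1 E2) (x, y) = nbhd V1 E1 x \<times> nbhd V2 E2 y"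
  unfolding nbhd_def cross_edges_def by auto

theorem mainTheorem13:
  fixes V1 :: "'a set" and E1 :: "'a \<Rightarrow> 'a \<Rightarrow> bool"
    and V2 :: "'b set" and E2 :: "'b \<Rightarrow> 'b \<Rightarrow> bool"
    and k l :: nat
  assumes "k \<ge> 1" and "l \<ge> 1"
    and "graph V1 E1" and "graph V2 E2"
    and "min_degree V1 E1 \<ge> k" and "min_degree V2 E2 \<ge> l"
  shows "upper_ktuple_tdom (k * l) (V1 \<times> V2) (cross_edges E1 E2)
           \<ge> upper_ktuple_tdom k V1 E1 * upper_ktuple_tdom l V2 E2"
proof -
  have f1: "finite V1" using assms(3) unfolding graph_def by auto
  have f2: "finite V2" using assms(4) unfolding graph_def by auto
  obtain S1 where S1: "is_minimal_kTDS k V1 E1 S1" "upper_ktuple_tdom k V1 E1 = card S1"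
    using upper_attained[OF assms(3,5)] by blast
  obtain S2 where S2: "is_minimal_kTDS l V2 E2 S2" "upper_ktuple_tdom l V2 E2 = card S2"
    using upper_attained[OF assms(4,6)] by blast
  have k1: "is_kTDS k V1 E1 S1" using S1 unfolding is_minimal_kTDS_def by auto
  have k2: "is_kTDS l V2 E2 S2" using S2 unfolding is_minimal_kTDS_def by auto
  let ?E = "cross_edges E1 E2"
  have int: "nbhd (V1 \<times> V2) ?E (x, y) \<inter> (S1 \<times> S2) = (nbhd V1 E1 x \<inter> S1) \<times> (nbhd V2 E2 y \<inter> S2)" for x y
    using nbhd_prod[of V1 V2 E1 E2 x y] by auto
  have kt: "is_kTDS (k*l) (V1 \<times> V2) ?E (S1 \<times> S2)"
    unfolding is_kTDS_def
  proof (intro conjI ballI)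
    show "S1 \<times> S2 \<subseteq> V1 \<times> V2" using k1 k2 unfolding is_kTDS_def by auto
  next
    fix p assume "p \<in> V1 \<times> V2"
    then obtain x y where p: "p = (x,y)" "x \<in> V1" "y \<in> V2" by auto
    have "k \<le> card (nbhd V1 E1 x \<inter> S1)" "l \<le> card (nbhd V2 E2 y \<inter> S2)"
      using k1 k2 p unfolding is_kTDS_def by auto
    thus "k * l \<le> card (nbhd (V1 \<times> V2) ?E p \<inter> (S1 \<times> S2))"
      using int p by (simp add: card_cartesian_product mult_le_mono)
  qed
  have mk: "is_minimal_kTDS (k*l) (V1 \<times> V2) ?E (S1 \<times> S2)"
    unfolding is_minimal_kTDS_def
  proof (intro conjI allI impI kt notI)
    fix T assume T: "T \<subset> S1 \<times> S2" and Tk: "is_kTDS (k*l) (V1 \<times> V2) ?E T"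
    then obtain a b where ab: "a \<in> S1" "b \<in> S2" "(a,b) \<notin> T" by auto
    obtain x where x: "x \<in> V1" "card (nbhd V1 E1 x \<inter> S1) = k" "a \<in> nbhd V1 E1 x"
      using min_witness[OF S1(1) ab(1) f1] by blast
    obtain y where y: "y \<in> V2" "card (nbhd V2 E2 y \<inter> S2) = l" "b \<in> nbhd V2 E2 y"
      using min_witness[OF S2(1) ab(2) f2] by blast
    let ?P = "(nbhd V1 E1 x \<inter> S1) \<times> (nbhd V2 E2 y \<inter> S2)"
    have finP: "finite ?P" using nbhd_fin[OF f1] nbhd_fin[OF f2] by auto
    have cP: "card ?P = k*l" using x y by (simp add: card_cartesian_product)
    have sub: "nbhd (V1 \<times> V2) ?E (x, y) \<inter> T \<subseteq> ?P - {(a,b)}"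
      using int[of x y] T ab by auto
    have "card (nbhd (V1 \<times> V2) ?E (x, y) \<inter> T) \<le> card (?P - {(a,b)})"
      using sub finP by (intro card_mono) auto
    also have "\<dots> = k*l - 1" using cP x y ab finP by (simp add: card_Diff_singleton)
    also have "\<dots> < k*l" using assms(1,2) by simp
    finally show False using Tk x(1) y(1) unfolding is_kTDS_def by fastforce
  qed
  have fin: "finite {card S | S. is_minimal_kTDS (k*l) (V1 \<times> V2) ?E S}"
  proof (rule finite_subset)
    show "{card S | S. is_minimal_kTDS (k*l) (V1 \<times> V2) ?E S} \<subseteq> card ` Pow (V1 \<times> V2)"
      unfolding is_minimal_kTDS_def is_kTDS_def by auto
  qed (use f1 f2 in auto)
  have "card (S1 \<times> S2) \<le> upper_ktuple_tdom (k*l) (V1 \<times> V2) ?E"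
    unfolding upper_ktuple_tdom_def using mk by (intro Max_ge[OF fin]) auto
  thus ?thesis using S1 S2 by (simp add: card_cartesian_product)
qed

end
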